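(* Let $k=-\frac{n}{2}(n-2)$. The map $\varphi\colon\Sigma^{2pk}E_*\to E_*\langle\det\rangle$ defined by $\varphi(x)=x\delta^k$ is an isomorphism of $F$--equivariant $E_*$--modules.
   Context: Let $p$ be an odd prime and $n=p-1$. Let $E=E_n$ be Morava $E$--theory with $E_*=\mathbb{W}[\![u_1,\dots,u_{n-1}]\!][u^{\pm1}]$, $\mathbb{W}=W(\mathbb{F}_{p^n})$, associated to the Honda formal group law of height $n$, with its action of the Morava stabilizer group $\mathbb{G}_n=\mathbb{S}_n\rtimes\mathrm{Gal}(\mathbb{F}_{p^n}/\mathbb{F}_p)$ ($\mathbb{S}_n$ the automorphism group of the Honda formal group law over $\mathbb{F}_{p^n}$). Let $\det\colon\mathbb{G}_n\to\mathbb{Z}_p^\times$ be the determinant (reduced norm) homomorphism. $E_*\langle\det\rangle$ denotes $E_*$ with the twisted action $\widehat{g}(x)=g(x)\det(g)$. Let $\omega\in\mathbb{W}$ be a primitive $(p^n-1)$--st root of unity; identifying $\mathbb{W}^\times$ with a subgroup of $\mathbb{S}_n$, let $\tau=\omega^{(p^n-1)/n^2}\in\mathbb{S}_n$, and write $\eta=\omega^{(p^n-1)/n^2}$ when viewed as an element of $\mathbb{W}\subseteq E_0$; then $\det(\tau)=\eta^{(p^n-1)/n}$. $F=\langle\zeta,\tau\rangle\cong C_p\rtimes C_{n^2}$ is a maximal finite subgroup of $\mathbb{S}_n$ with $\zeta$ of order $p$, $\tau^{-1}\zeta\tau=\zeta^e$ for $e$ a generator of $(\mathbb{Z}/p)^\times$,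 and $\det(\zeta)=1$. The element $\delta\in E_{2p}$ is the unit, invariant under $C_p=\langle\zeta\rangle$, appearing in the Hopkins--Miller computation $\widehat{H}^*(C_p,E_* )\cong\mathbb{F}_{p^n}[a,b^{\pm1},\delta^{\pm1}]/(a^2)$; it satisfies $\tau(\delta)=\eta^{-p}\delta$. *)

theory Defs
  imports Main "HOL-Algebra.Group" "HOL-Algebra.Generated_Groups" "HOL-Number_Theory.Number_Theory"
begin

text \<open>Integer powers of a unit u with chosen inverse u' (u * u' = 1).\<close>
definition upow :: "'e::comm_ring_1 \<Rightarrow> 'e \<Rightarrow> int \<Rightarrow> 'e" where
  "upow u u' k = (if 0 \<le> k then u ^ nat k else u' ^ nat (- k))"

definition twisted_act :: "('g \<Rightarrow> 'e::comm_ring_1 \<Rightarrow> 'e) \<Rightarrow> ('g \<Rightarrow> 'e) \<Rightarrow> 'g \<Rightarrow> 'e \<Rightarrow> 'e" where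
  "twisted_act act detE g x = act g x * detE g"

text \<open>The exponent k = -(n/2)(n-2) (n = p - 1 is even).\<close>
definition kexp :: "nat \<Rightarrow> int" where
  "kexp n = - int (n * (n - 2) div 2)"

end

theory Submission
  imports Defs
begin

lemma binom3: "\<exists>q. (1+n)^j = 1 + j*n + (j choose 2)*n^2 + q*(n::nat)^3"
proof (induction j)
  case 0 then show ?case by simp
next
  case (Suc j)
  then obtain q where q: "(1+n)^j = 1 + j*n + (j choose 2)*n^2 + q*n^3" by blast
  have c: "Suc j choose 2 = (j choose 2) + j"
    using binomial_Suc_Suc[of j 1] by (simp add: numeral_2_eq_2)
  have "(1+n)^Suc j = (1 + j*n + (j choose 2)*n^2 + q*n^3) * (1+n)" using q by simp
  also have "\<dots> = 1 + Suc j*n + (Suc j choose 2)*n^2 + (q + q*n + (j choose 2))*n^3"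
    unfolding c by (simp add: algebra_simps power2_eq_square power3_eq_cube)
  finally show ?case by blast
qed

lemma key_nt:
  assumes "even n" "n \<ge> 2"
  shows "n^2 dvd (n+1)*(n*(n-2) div 2) + ((n+1)^n - 1) div n"
proof -
  obtain t where t: "n = 2*t" using assms by blast
  have t1: "t \<ge> 1" using t assms by simp
  obtain q where q: "(1+n)^n = 1 + n*n + (n choose 2)*n^2 + q*n^3" using binom3 by blast
  have ch: "n choose 2 = t*(2*t-1)" unfolding choose_two t by simp
  have "(n+1)^n - 1 = n * (n + t*(2*t-1)*n + q*n^2)"
    using q ch by (simp add: algebra_simps power2_eq_square power3_eq_cube)
  hence d: "((n+1)^n - 1) div n = n + t*(2*t-1)*n + q*n^2" using assms by simp
  have m: "n*(n-2) div 2 = t*(n-2)" unfolding t by simp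
  obtain s where s: "t = Suc s" using t1 by (cases t) auto
  have "(n+1)*(n*(n-2) div 2) + ((n+1)^n - 1) div n = n^2 * (2*t - 1 + q)"
    unfolding d m unfolding t s by (simp add: algebra_simps power2_eq_square)
  thus ?thesis by simp
qed
theorem lemma4p16:
  fixes p n :: nat
    and F :: "('g, 'b) monoid_scheme"
    and zeta tau :: 'g and e :: nat
    and act :: "'g \<Rightarrow> 'e::comm_ring_1 \<Rightarrow> 'e"
    and detE :: "'g \<Rightarrow> 'e"
    and hom :: "int \<Rightarrow> 'e set"
    and \<delta> \<delta>' \<eta> :: 'e
  assumes p: "prime p" "odd p" and n: "n = p - 1"
    (* grading of E_* *)
    and hom_add: "\<And>d x y. x \<in> hom d \<Longrightarrow> y \<in> hom d \<Longrightarrow> x + y \<in> hom d \<and> - x \<in> hom d"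
    and hom_zero: "\<And>d. 0 \<in> hom d"
    and hom_mult: "\<And>i j x y. x \<in> hom i \<Longrightarrow> y \<in> hom j \<Longrightarrow> x * y \<in> hom (i + j)"
    and hom_one: "1 \<in> hom 0"
    (* the finite group F = <zeta, tau> = C_p semidirect C_{n^2} *)
    and grp: "group F"
    and gens: "zeta \<in> carrier F" "tau \<in> carrier F"
    and F_gen: "carrier F = generate F {zeta, tau}"
    and ord_zeta: "group.ord F zeta = p" and ord_tau: "group.ord F tau = n ^ 2"
    and e_gen: "ord p e = p - 1"
    and conj: "inv\<^bsub>F\<^esub> tau \<otimes>\<^bsub>F\<^esub> zeta \<otimes>\<^bsub>F\<^esub> tau = zeta [^]\<^bsub>F\<^esub> e"
    (* action of F on E_* by graded ring automorphisms *)
    and act_one: "\<And>x. act \<one>\<^bsub>F\<^esub> x = x"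
    and act_mult: "\<And>g h x. g \<in> carrier F \<Longrightarrow> h \<in> carrier F \<Longrightarrow>
                     act (g \<otimes>\<^bsub>F\<^esub> h) x = act g (act h x)"
    and act_add: "\<And>g x y. g \<in> carrier F \<Longrightarrow> act g (x + y) = act g x + act g y"
    and act_times: "\<And>g x y. g \<in> carrier F \<Longrightarrow> act g (x * y) = act g x * act g y"
    and act_1: "\<And>g. g \<in> carrier F \<Longrightarrow> act g 1 = 1"
    and act_hom: "\<And>g d x. g \<in> carrier F \<Longrightarrow> x \<in> hom d \<Longrightarrow> act g x \<in> hom d"
    (* the determinant, viewed in E_0 *)
    and det_mult: "\<And>g h. g \<in> carrier F \<Longrightarrow> h \<in> carrier F \<Longrightarrow>
                     detE (g \<otimes>\<^bsub>F\<^esub> h) = detE g * detE h"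
    and det_one: "detE \<one>\<^bsub>F\<^esub> = 1"
    and det_hom: "\<And>g. g \<in> carrier F \<Longrightarrow> detE g \<in> hom 0"
    and det_fixed: "\<And>g h. g \<in> carrier F \<Longrightarrow> h \<in> carrier F \<Longrightarrow> act g (detE h) = detE h"
    (* eta: a primitive n^2-th root of unity in W, and det(tau) = eta^((p^n-1)/n) *)
    and eta_hom: "\<eta> \<in> hom 0"
    and eta_root: "\<eta> ^ (n ^ 2) = 1"
    and eta_prim: "\<And>j. 0 < j \<Longrightarrow> j < n ^ 2 \<Longrightarrow> \<eta> ^ j \<noteq> 1"
    and det_zeta: "detE zeta = 1"
    and det_tau: "detE tau = \<eta> ^ ((p ^ n - 1) div n)"
    (* delta: a unit in E_{2p}, C_p-invariant, with tau(delta) = eta^(-p) delta *)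
    and delta_hom: "\<delta> \<in> hom (2 * int p)" and delta'_hom: "\<delta>' \<in> hom (- 2 * int p)"
    and delta_inv: "\<delta> * \<delta>' = 1"
    and zeta_delta: "act zeta \<delta> = \<delta>"
    and tau_delta: "\<eta> ^ p * act tau \<delta> = \<delta>"
  shows "(let k = kexp n; \<phi> = (\<lambda>x. x * upow \<delta> \<delta>' k) in
           bij \<phi>
         \<and> (\<forall>d. bij_betw \<phi> (hom (d - 2 * int p * k)) (hom d))
         \<and> (\<forall>x y. \<phi> (x + y) = \<phi> x + \<phi> y)
         \<and> (\<forall>a x. \<phi> (a * x) = a * \<phi> x)
         \<and> (\<forall>g \<in> carrier F. \<forall>x. \<phi> (act g x) = twisted_act act detE g (\<phi> x)))"
  proof -
  define m where "m = n*(n-2) div 2"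
  define c where "c = \<delta>' ^ m"
  have p2: "p \<ge> 3" using p by (metis One_nat_def Suc_1 Suc_leI dvd_refl le_neq_implies_less numeral_3_eq_3 odd_one prime_ge_2_nat)
  have n2: "n \<ge> 2" "even n" using p2 p n by auto
  have k: "kexp n = - int m" unfolding kexp_def m_def by simp
  have up: "upow \<delta> \<delta>' (kexp n) = c" unfolding k upow_def c_def by auto
  have hpow: "x ^ j \<in> hom (int j * i)" if "x \<in> hom i" for x i j
  proof (induction j)
    case 0 then show ?case using hom_one by simp
  next
    case (Suc j) then show ?case using hom_mult[OF that Suc] by (simp add: algebra_simps)
  qed
  have cdm: "c * \<delta> ^ m = 1" unfolding c_def by (metis delta_inv mult.commute power_mult_distrib power_one)
  have chom: "c \<in> hom (2 * int p * kexp n)" unfolding c_def k using hpow[OF delta'_hom, of m] by (simp add: algebra_simps)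
  have dmhom: "\<delta> ^ m \<in> hom (- (2 * int p * kexp n))" unfolding k using hpow[OF delta_hom, of m] by (simp add: algebra_simps)
  have gF: "group F" by (rule grp)
  have eta_unit: "\<eta> * \<eta> ^ (n^2 - 1) = 1"
    using eta_root n2 by (metis One_nat_def Suc_pred power_Suc pos2 zero_less_power numeral_2_eq_2 le_trans less_le_trans)
  have tdelta: "act tau \<delta> = (\<eta> ^ (n^2 - 1)) ^ p * \<delta>"
  proof -
    have "(\<eta> ^ (n^2 - 1)) ^ p * \<delta> = (\<eta> ^ (n^2 - 1)) ^ p * (\<eta> ^ p * act tau \<delta>)" using tau_delta by simp
    also have "\<dots> = (\<eta> * \<eta> ^ (n^2 - 1)) ^ p * act tau \<delta>" by (simp add: power_mult_distrib algebra_simps)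
    finally show ?thesis using eta_unit by simp
  qed
  have tdelta': "act tau \<delta>' = \<eta> ^ p * \<delta>'"
  proof -
    have "act tau \<delta> * act tau \<delta>' = 1" using act_times[OF gens(2)] act_1[OF gens(2)] delta_inv by metis
    hence "(\<eta> ^ (n^2 - 1)) ^ p * \<delta> * act tau \<delta>' = 1" using tdelta by simp
    hence "(\<eta> ^ p * \<delta>') * ((\<eta> ^ (n^2 - 1)) ^ p * \<delta> * act tau \<delta>') = \<eta> ^ p * \<delta>'" by simp
    moreover have "(\<eta> ^ p * \<delta>') * ((\<eta> ^ (n^2 - 1)) ^ p * \<delta>) = 1"
    proof -
      have "(\<eta> ^ p * \<delta>') * ((\<eta> ^ (n^2 - 1)) ^ p * \<delta>) = (\<eta> * \<eta> ^ (n^2 - 1)) ^ p * (\<delta> * \<delta>')"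
        by (simp add: power_mult_distrib algebra_simps)
      thus ?thesis using eta_unit delta_inv by simp
    qed
    ultimately show ?thesis by (metis mult.assoc mult_1)
  qed
  have actpow: "act g (x ^ j) = act g x ^ j" if "g \<in> carrier F" for g x j
    by (induction j) (simp_all add: act_1[OF that] act_times[OF that])
  have zc: "act zeta c * detE zeta = c"
  proof -
    have "act zeta \<delta> * act zeta \<delta>' = 1" using act_times[OF gens(1)] act_1[OF gens(1)] delta_inv by metis
    hence "act zeta \<delta>' = \<delta>'" using zeta_delta delta_inv by (metis mult.assoc mult.commute mult_1)
    thus ?thesis unfolding c_def using actpow[OF gens(1)] det_zeta by simp
  qed
  have tc: "act tau c * detE tau = c"
  proof -
    have ex: "n^2 dvd p * m + (p ^ n - 1) div n"
      using key_nt[OF n2(2) n2(1)] n p2 unfolding m_def by simp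
    then obtain r where r: "p * m + (p ^ n - 1) div n = n^2 * r" by blast
    have "act tau c * detE tau = (\<eta> ^ p * \<delta>') ^ m * \<eta> ^ ((p ^ n - 1) div n)"
      unfolding c_def actpow[OF gens(2)] tdelta' det_tau by simp
    also have "\<dots> = \<eta> ^ (p * m + (p ^ n - 1) div n) * c"
      unfolding c_def by (simp add: power_mult_distrib power_add algebra_simps flip: power_mult)
    also have "\<dots> = c" unfolding r power_mult eta_root by simp
    finally show ?thesis .
  qed
  have inv_det: "detE g * detE (inv\<^bsub>F\<^esub> g) = 1" if "g \<in> carrier F" for g
    using det_mult[OF that group.inv_closed[OF gF that]] group.r_inv[OF gF that] det_one by simp
  have pinv: "act (inv\<^bsub>F\<^esub> g) c * detE (inv\<^bsub>F\<^esub> g) = c"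
    if g: "g \<in> carrier F" and P: "act g c * detE g = c" for g
  proof -
    let ?h = "inv\<^bsub>F\<^esub> g"
    have h: "?h \<in> carrier F" using group.inv_closed[OF gF g] .
    have "c = act (?h \<otimes>\<^bsub>F\<^esub> g) c * detE (?h \<otimes>\<^bsub>F\<^esub> g)"
      using group.l_inv[OF gF g] act_one det_one by simp
    also have "\<dots> = act ?h (act g c) * detE ?h * detE g"
      using act_mult[OF h g] det_mult[OF h g] by (simp add: mult.assoc)
    also have "act g c = act g c * (detE g * detE ?h)" using inv_det[OF g] by simp
    also have "\<dots> = c * detE ?h" using P by (simp add: mult.assoc[symmetric])
    also have "act ?h (c * detE ?h) = act ?h c * detE ?h"
      using act_times[OF h] det_fixed[OF h h] by simp
    finally have "c = act ?h c * detE ?h * (detE ?h * detE g)" by (simp add: algebra_simps)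
    thus ?thesis using inv_det[OF g] by (simp add: mult.commute)
  qed
  have inv_all: "act g c * detE g = c" if "g \<in> carrier F" for g
  proof -
    have "g \<in> generate F {zeta, tau}" using that F_gen by simp
    thus ?thesis
    proof (induction rule: generate.induct)
      case one then show ?case using act_one det_one by simp
    next
      case (incl h) then show ?case using zc tc by auto
    next
      case (inv h) then show ?case using pinv zc tc gens by auto
    next
      case (eng h1 h2)
      have c1: "h1 \<in> carrier F" "h2 \<in> carrier F" using eng.hyps F_gen by auto
      have "act (h1 \<otimes>\<^bsub>F\<^esub> h2) c * detE (h1 \<otimes>\<^bsub>F\<^esub> h2) = act h1 (act h2 c * detE h2) * detE h1"
        using act_mult[OF c1] det_mult[OF c1] act_times[OF c1(1)] det_fixed[OF c1] by (simp add: algebra_simps)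
      then show ?case using eng.IH by simp
    qed
  qed
  define \<phi> where "\<phi> = (\<lambda>x. x * c)"
  have inv1: "\<phi> (x * \<delta> ^ m) = x" for x unfolding \<phi>_def using cdm by (metis mult.assoc mult.commute mult_1)
  have inv2: "x * \<delta> ^ m * c = x" for x using cdm by (metis mult.assoc mult.commute mult_1)
  have inv3: "x * c * \<delta> ^ m = x" for x using cdm by (metis mult.assoc mult_1_right)
  have b1: "bij \<phi>"
    by (rule bij_betwI[where g="\<lambda>x. x * \<delta> ^ m"]) (auto simp: inv1 inv2 inv3 \<phi>_def)
  have b2: "bij_betw \<phi> (hom (d - 2 * int p * kexp n)) (hom d)" for d
  proof (rule bij_betwI[where g="\<lambda>x. x * \<delta> ^ m"])
    show "\<phi> \<in> hom (d - 2 * int p * kexp n) \<rightarrow> hom d"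
      using hom_mult[OF _ chom] unfolding \<phi>_def by fastforce
    show "(\<lambda>x. x * \<delta> ^ m) \<in> hom d \<rightarrow> hom (d - 2 * int p * kexp n)"
      using hom_mult[OF _ dmhom] by fastforce
  qed (auto simp: inv1 inv2 inv3 \<phi>_def)
  have eq: "\<phi> (act g x) = twisted_act act detE g (\<phi> x)" if "g \<in> carrier F" for g x
    unfolding \<phi>_def twisted_act_def using inv_all[OF that] act_times[OF that]
    by (metis mult.assoc)
  show ?thesis unfolding Let_def up
    using b1 b2 eq unfolding \<phi>_def by (auto simp: algebra_simps)
qed

end
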